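(* Under the standing setup, there exists a polynomial $p_3(x)$ such that for all sufficiently large $n$, $$\mu\otimes\mu(Q_{n,k})\le p_3(n)\,e^{-2n(h(\mu)-\delta)}\gamma^n.$$
   Context: Standing setup. $\mathcal{A}$ is a finite alphabet, $X\subset\mathcal{A}^{\mathbb{Z}}$ a non-trivial topologically mixing SFT with left shift $\sigma$, $f:X\to\mathbb{R}$ H\"older continuous with pressure $P=P_X(f)$, and $\mu$ the Gibbs measure (unique equilibrium state) of $f$, with entropy $h(\mu)$. $B_m(X)$ is the set of words of length $m$ in $X$; $[w]=\{x\in X:x_0\dots x_{|w|-1}=w\}$, $\mu(w)=\mu([w])$, and $\mu\otimes\mu(S)=\sum_{(u,v)\in S}\mu(u)\mu(v)$. Words are written $u=u_1\dots u_k$, $u_i^j=u_i\dots u_j$. $K>1$ is a constant such that: (i) for all $m\ge1$, $x\in X$: $K^{-1}\le\mu(x_0\dots x_{m-1})/\exp(-Pm+\sum_{i=0}^{m-1}f(\sigma^ix))\le K$; (ii) $\mu(uv)\le K\mu(u)\mu(v)$ and $\mu(\sigma^{-|u|}[v]\mid[u])\le K\mu(v)$ whenever $uv\in B(X)$. $\gamma_0=\inf\{\gamma>0:\exists n_0\ \forall m\ge n_0\ \forall u\in B_m(X),\ \mu(u)\le\gamma^m\}$. Parameters: $\alpha\in(\gamma_0,1]$; $\gamma\in(\gamma_0,\alpha)$; $n_0$ such that $\mu(u)\le\gamma^{|u|}$ for all $u\in B(X)$ with $|u|\ge n_0$; $n\ge n_0$; $0<\delta<\frac14\log(\alpha/\gamma)$;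 $k=k(n)$ with $n/k\to0$ and $k=o(n^2/\log n)$; $\ell=k-n+1$. For a word $u$ of length $\ge n$, $W_n(u)$ is the set of distinct subwords of $u$ of length $n$. $E_n=\{u\in B_n(X):|-\frac1n\log\mu(u)-h(\mu)|<\delta\}$, $G_{n,k}=\{u\in B_k(X): u_1^n=u_\ell^k\text{ and }u_1^n\in E_n\}$, and $Q_{n,k}=\{(u,v)\in G_{n,k}\times G_{n,k}: W_n(u)\cap W_n(v)\neq\emptyset\}$. *)

theory Defs
  imports "HOL-Probability.Probability" "HOL-Library.Landau_Symbols"
          "HOL-Computational_Algebra.Polynomial"
begin

text \<open>Configurations of the full shift over a finite alphabet: functions int => 'a.
Words are lists; the word u = u_1 ... u_k is the list [u!0, ..., u!(k-1)].\<close>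

definition cyl :: "'a list \<Rightarrow> (int \<Rightarrow> 'a) set" where
  "cyl w = {x. \<forall>j<length w. x (int j) = w ! j}"

definition shift :: "(int \<Rightarrow> 'a) \<Rightarrow> (int \<Rightarrow> 'a)" where
  "shift x = (\<lambda>i. x (i + 1))"

definition lang :: "(int \<Rightarrow> 'a) set \<Rightarrow> 'a list set" where
  "lang X = {w. cyl w \<inter> X \<noteq> {}}"

definition words :: "(int \<Rightarrow> 'a) set \<Rightarrow> nat \<Rightarrow> 'a list set" where
  "words X m = {w. length w = m \<and> cyl w \<inter> X \<noteq> {}}"

definition init_word :: "(int \<Rightarrow> 'a) \<Rightarrow> nat \<Rightarrow> 'a list" where
  "init_word x m = map (\<lambda>j. x (int j)) [0..<m]"

definition is_SFT :: "(int \<Rightarrow> 'a) set \<Rightarrow> bool" where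
  "is_SFT X \<longleftrightarrow> (\<exists>F. finite F \<and>
      X = {x. \<forall>i. \<forall>w\<in>F. \<not> (\<forall>j<length w. x (i + int j) = w ! j)})"

definition top_mixing :: "(int \<Rightarrow> 'a) set \<Rightarrow> bool" where
  "top_mixing X \<longleftrightarrow> (\<forall>u\<in>lang X. \<forall>v\<in>lang X. \<exists>N. \<forall>m\<ge>N.
      \<exists>x\<in>X. x \<in> cyl u \<and> (shift ^^ m) x \<in> cyl v)"

text \<open>Hoelder continuity w.r.t. the metric d(x,y) = 2^(-min{|i| : x i \<noteq> y i}).\<close>
definition holder_on :: "(int \<Rightarrow> 'a) set \<Rightarrow> ((int \<Rightarrow> 'a) \<Rightarrow> real) \<Rightarrow> bool" where
  "holder_on X f \<longleftrightarrow> (\<exists>C \<theta>. 0 < \<theta> \<and> \<theta> < 1 \<and>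
      (\<forall>x\<in>X. \<forall>y\<in>X. \<forall>N::nat. (\<forall>i. \<bar>i\<bar> < int N \<longrightarrow> x i = y i) \<longrightarrow>
          \<bar>f x - f y\<bar> \<le> C * \<theta> ^ N))"

definition birkhoff :: "((int \<Rightarrow> 'a) \<Rightarrow> real) \<Rightarrow> nat \<Rightarrow> (int \<Rightarrow> 'a) \<Rightarrow> real" where
  "birkhoff f m x = (\<Sum>i<m. f ((shift ^^ i) x))"

definition pressure :: "(int \<Rightarrow> 'a) set \<Rightarrow> ((int \<Rightarrow> 'a) \<Rightarrow> real) \<Rightarrow> real" where
  "pressure X f = lim (\<lambda>m. ln (\<Sum>w\<in>words X m. exp (SUP x\<in>cyl w \<inter> X. birkhoff f m x)) / real m)"

text \<open>Borel sigma-algebra of A^Z (product of discrete spaces).\<close>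
definition shift_space :: "(int \<Rightarrow> 'a) measure" where
  "shift_space = PiM UNIV (\<lambda>_. count_space UNIV)"

definition wmeas :: "(int \<Rightarrow> 'a) measure \<Rightarrow> 'a list \<Rightarrow> real" where
  "wmeas \<nu> w = measure \<nu> (cyl w)"

text \<open>Kolmogorov-Sinai entropy, computed with the (generating) time-zero partition.\<close>
definition ms_entropy :: "(int \<Rightarrow> 'a) set \<Rightarrow> (int \<Rightarrow> 'a) measure \<Rightarrow> real" where
  "ms_entropy X \<nu> = lim (\<lambda>m. - (\<Sum>w\<in>words X m. wmeas \<nu> w * ln (wmeas \<nu> w)) / real m)"

definition invariant_on :: "(int \<Rightarrow> 'a) set \<Rightarrow> (int \<Rightarrow> 'a) measure \<Rightarrow> bool" where
  "invariant_on X \<nu> \<longleftrightarrow> prob_space \<nu> \<and> sets \<nu> = sets shift_space \<and>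
     shift \<in> measurable \<nu> \<nu> \<and>
     (\<forall>A\<in>sets \<nu>. measure \<nu> (shift -` A) = measure \<nu> A) \<and>
     (AE x in \<nu>. x \<in> X)"

definition equilibrium_state ::
  "(int \<Rightarrow> 'a) set \<Rightarrow> ((int \<Rightarrow> 'a) \<Rightarrow> real) \<Rightarrow> (int \<Rightarrow> 'a) measure \<Rightarrow> bool" where
  "equilibrium_state X f \<mu> \<longleftrightarrow> invariant_on X \<mu> \<and>
     (\<forall>\<nu>. invariant_on X \<nu> \<longrightarrow>
        ms_entropy X \<nu> + (\<integral>x. indicator X x * f x \<partial>\<nu>)
          \<le> ms_entropy X \<mu> + (\<integral>x. indicator X x * f x \<partial>\<mu>))"

definition gamma0 :: "(int \<Rightarrow> 'a) set \<Rightarrow> (int \<Rightarrow> 'a) measure \<Rightarrow> real" where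
  "gamma0 X \<mu> = Inf {g. g > 0 \<and> (\<exists>n0. \<forall>m\<ge>n0. \<forall>u\<in>words X m. wmeas \<mu> u \<le> g ^ m)}"

definition subwords :: "nat \<Rightarrow> 'a list \<Rightarrow> 'a list set" where
  "subwords n u = {take n (drop i u) | i. i + n \<le> length u}"

definition E_set :: "(int \<Rightarrow> 'a) set \<Rightarrow> (int \<Rightarrow> 'a) measure \<Rightarrow> real \<Rightarrow> nat \<Rightarrow> 'a list set" where
  "E_set X \<mu> \<delta> n = {u\<in>words X n.
      \<bar>- (1 / real n) * ln (wmeas \<mu> u) - ms_entropy X \<mu>\<bar> < \<delta>}"

text \<open>G_{n,k}: u_1^n = u_l^k with l = k - n + 1, i.e. take n u = drop (k - n) u.\<close>
definition G_set :: "(int \<Rightarrow> 'a) set \<Rightarrow> (int \<Rightarrow> 'a) measure \<Rightarrow> real \<Rightarrow> nat \<Rightarrow> nat \<Rightarrow> 'a list set" where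
  "G_set X \<mu> \<delta> n k = {u\<in>words X k. take n u = drop (k - n) u \<and> take n u \<in> E_set X \<mu> \<delta> n}"

definition Q_set :: "(int \<Rightarrow> 'a) set \<Rightarrow> (int \<Rightarrow> 'a) measure \<Rightarrow> real \<Rightarrow> nat \<Rightarrow> nat \<Rightarrow> ('a list \<times> 'a list) set" where
  "Q_set X \<mu> \<delta> n k = {(u, v). u \<in> G_set X \<mu> \<delta> n k \<and> v \<in> G_set X \<mu> \<delta> n k \<and>
      subwords n u \<inter> subwords n v \<noteq> {}}"

end

theory Submission
  imports Defs
begin

lemma cyl_sets: "cyl w \<in> sets shift_space"
proof -
  have "cyl w = {x \<in> space shift_space. \<forall>j\<in>{..<length w}. x (int j) = w ! j}"
    by (auto simp: cyl_def shift_space_def space_PiM)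
  also have "\<dots> \<in> sets shift_space"
    unfolding shift_space_def by measurable
  finally show ?thesis .
qed

lemma split3_list: "take a xs @ take b (drop a xs) @ drop (a+b) xs = xs"
  by (metis append.assoc append_take_drop_id take_add)

lemma sum_len_le1:
  fixes \<mu> :: "(int \<Rightarrow> 'a::finite) measure"
  assumes P: "prob_space \<mu>" and S: "sets \<mu> = sets shift_space"
    and L: "\<forall>w\<in>W. length w = m"
  shows "(\<Sum>w\<in>W. wmeas \<mu> w) \<le> 1"
proof -
  have fin: "finite W"
  proof (rule finite_subset)
    show "W \<subseteq> {xs. set xs \<subseteq> UNIV \<and> length xs = m}" using L by auto
    show "finite {xs. set xs \<subseteq> (UNIV::'a set) \<and> length xs = m}"
      by (rule finite_lists_length_eq) simp
  qed
  have disj: "disjoint_family_on cyl W"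
    unfolding disjoint_family_on_def
  proof (intro ballI impI)
    fix v w assume v: "v \<in> W" and w: "w \<in> W" and ne: "v \<noteq> w"
    then obtain j where j: "j < m" "v ! j \<noteq> w ! j"
      using L by (metis nth_equalityI)
    show "cyl v \<inter> cyl w = {}" using j L v w by (auto simp: cyl_def)
  qed
  interpret prob_space \<mu> by (rule P)
  have "(\<Sum>w\<in>W. wmeas \<mu> w) = measure \<mu> (\<Union>(cyl ` W))"
    unfolding wmeas_def
    by (rule measure_finite_Union[symmetric]) (use fin disj cyl_sets S in auto)
  also have "\<dots> \<le> 1" by (rule prob_le_1)
  finally show ?thesis .
qed

lemma sum_union_le:
  fixes f :: "'b \<Rightarrow> real"
  assumes "finite I" "\<And>i. i \<in> I \<Longrightarrow> finite (A i)" "\<And>x. f x \<ge> 0"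
  shows "sum f (\<Union>(A ` I)) \<le> (\<Sum>i\<in>I. sum f (A i))"
  using assms
proof (induction I rule: finite_induct)
  case empty then show ?case by simp
next
  case (insert a I)
  have "sum f (\<Union>(A ` insert a I)) = sum f (A a \<union> \<Union>(A ` I))" by simp
  also have "\<dots> \<le> sum f (A a) + sum f (\<Union>(A ` I))"
    using insert by (simp add: sum_Un sum_nonneg)
  also have "\<dots> \<le> sum f (A a) + (\<Sum>i\<in>I. sum f (A i))" using insert by auto
  finally show ?case using insert by simp
qed

lemma SFT_shift: assumes "is_SFT X" "x \<in> X" shows "shift x \<in> X"
proof -
  from assms(1) obtain F where F: "X = {x. \<forall>i. \<forall>w\<in>F. \<not> (\<forall>j<length w. x (i + int j) = w ! j)}"
    unfolding is_SFT_def by blast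
  show ?thesis using assms(2) unfolding F shift_def
    by (auto simp: algebra_simps) (metis add.assoc add.commute)
qed

lemma shift_pow: "(shift ^^ m) x i = x (i + int m)"
  by (induction m arbitrary: i) (auto simp: shift_def algebra_simps)

lemma SFT_shift_pow: assumes "is_SFT X" "x \<in> X" shows "(shift ^^ m) x \<in> X"
  by (induction m) (auto intro: SFT_shift[OF assms(1)] assms(2))

lemma lang_take: "u \<in> lang X \<Longrightarrow> take m u \<in> lang X"
  unfolding lang_def cyl_def by auto

lemma lang_drop: assumes "is_SFT X" "u \<in> lang X" shows "drop m u \<in> lang X"
proof -
  from assms(2) obtain x where x: "x \<in> cyl u" "x \<in> X" unfolding lang_def by auto
  have "(shift ^^ m) x \<in> cyl (drop m u)"
    using x(1) unfolding cyl_def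
    by (auto simp: shift_pow) (metis add.commute of_nat_add less_diff_conv)
  then show ?thesis using SFT_shift_pow[OF assms(1) x(2)] unfolding lang_def by auto
qed

lemma split3_bound:
  assumes SFT: "is_SFT X" and K: "K \<ge> 0"
    and QB: "\<And>u v. u @ v \<in> lang X \<Longrightarrow> wmeas \<mu> (u @ v) \<le> K * wmeas \<mu> u * wmeas \<mu> v"
    and L: "C @ s @ D \<in> lang X"
  shows "wmeas \<mu> (C @ s @ D) \<le> K^2 * wmeas \<mu> C * wmeas \<mu> s * wmeas \<mu> D"
proof -
  have sD: "s @ D \<in> lang X" using lang_drop[OF SFT L, of "length C"] by simp
  have C0: "wmeas \<mu> C \<ge> 0" by (simp add: wmeas_def)
  have "wmeas \<mu> (C @ s @ D) \<le> K * wmeas \<mu> C * wmeas \<mu> (s @ D)" using QB L by blast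
  also have "\<dots> \<le> K * wmeas \<mu> C * (K * wmeas \<mu> s * wmeas \<mu> D)"
    using QB[OF sD] K C0 by (intro mult_left_mono) auto
  finally show ?thesis by (simp add: power2_eq_square algebra_simps)
qed

definition Cf :: "nat \<Rightarrow> nat \<Rightarrow> nat \<Rightarrow> 'a list \<Rightarrow> 'a list" where
  "Cf n k i u = (if i + 2*n \<le> k then take i u else take (i-n) (drop n u))"
definition Df :: "nat \<Rightarrow> nat \<Rightarrow> nat \<Rightarrow> 'a list \<Rightarrow> 'a list" where
  "Df n k i u = (if i + 2*n \<le> k then drop (i+n) (take (k-n) u) else drop (i+n) u)"
definition sf :: "nat \<Rightarrow> nat \<Rightarrow> 'a list \<Rightarrow> 'a list" where
  "sf n i u = take n (drop i u)"

lemma G_props: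
  assumes "u \<in> G_set X \<mu> \<delta> n k"
  shows "length u = k" "u \<in> lang X" "take n u = drop (k-n) u" "take n u \<in> E_set X \<mu> \<delta> n"
  using assms by (auto simp: G_set_def words_def lang_def)

lemma decomp:
  assumes u: "u \<in> G_set X \<mu> \<delta> n k" and nk: "3*n \<le> k" and i: "i + n \<le> k"
  shows "i + 2*n \<le> k \<Longrightarrow> take (k-n) u = Cf n k i u @ sf n i u @ Df n k i u \<and> u = take (k-n) u @ take n u"
    and "\<not> i + 2*n \<le> k \<Longrightarrow> drop n u = Cf n k i u @ sf n i u @ Df n k i u \<and> u = take n u @ drop n u"
proof -
  note G = G_props[OF u]
  show "i + 2*n \<le> k \<Longrightarrow> take (k-n) u = Cf n k i u @ sf n i u @ Df n k i u \<and> u = take (k-n) u @ take n u"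
  proof
    assume c: "i + 2*n \<le> k"
    have ikn: "i \<le> k - n" using c by linarith
    have e0: "take (k-n) u = take i (take (k-n) u) @ take n (drop i (take (k-n) u)) @ drop (i+n) (take (k-n) u)"
      by (rule split3_list[symmetric])
    have e1: "take i (take (k-n) u) = take i u" using ikn by (simp add: min_def)
    have e2: "take n (drop i (take (k-n) u)) = take n (drop i u)" using c
      by (simp add: drop_take take_take min_def)
    show "take (k-n) u = Cf n k i u @ sf n i u @ Df n k i u"
      using c e0 e1 e2 by (simp add: Cf_def Df_def sf_def)
    show "u = take (k-n) u @ take n u" using G(3) by simp
  qed
  show "\<not> i + 2*n \<le> k \<Longrightarrow> drop n u = Cf n k i u @ sf n i u @ Df n k i u \<and> u = take n u @ drop n u"
  proof
    assume c: "\<not> i + 2*n \<le> k"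
    hence ni: "n \<le> i" using nk by linarith
    have "drop n u = take (i-n) (drop n u) @ take n (drop (i-n) (drop n u)) @ drop (i-n+n) (drop n u)"
      by (rule split3_list[symmetric])
    also have "drop (i-n) (drop n u) = drop i u" using ni by simp
    also have "drop (i-n+n) (drop n u) = drop (i+n) u" using ni by simp
    finally show "drop n u = Cf n k i u @ sf n i u @ Df n k i u"
      using c by (simp add: Cf_def Df_def sf_def)
    show "u = take n u @ drop n u" by simp
  qed
qed

lemma E_bound:
  assumes "w \<in> E_set X \<mu> \<delta> n" "n \<ge> 1"
  shows "wmeas \<mu> w \<le> exp (- real n * (ms_entropy X \<mu> - \<delta>))"
proof (cases "wmeas \<mu> w = 0")
  case True then show ?thesis by simp
next
  case False
  hence pos: "wmeas \<mu> w > 0" by (simp add: wmeas_def order_le_neq_trans)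
  from assms have "\<bar>- (1 / real n) * ln (wmeas \<mu> w) - ms_entropy X \<mu>\<bar> < \<delta>"
    by (simp add: E_set_def)
  hence "- (1 / real n) * ln (wmeas \<mu> w) > ms_entropy X \<mu> - \<delta>" by linarith
  hence "ln (wmeas \<mu> w) < - real n * (ms_entropy X \<mu> - \<delta>)" using assms(2)
    by (simp add: field_simps)
  hence "exp (ln (wmeas \<mu> w)) < exp (- real n * (ms_entropy X \<mu> - \<delta>))" by simp
  thus ?thesis using pos by simp
qed

lemma wmeas_nonneg[simp]: "wmeas \<mu> w \<ge> 0" by (simp add: wmeas_def)

lemma point_bound:
  assumes SFT: "is_SFT X" and K: "K \<ge> 0"
    and QB: "\<And>u v. u @ v \<in> lang X \<Longrightarrow> wmeas \<mu> (u @ v) \<le> K * wmeas \<mu> u * wmeas \<mu> v"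
    and u: "u \<in> G_set X \<mu> \<delta> n k" and nk: "3*n \<le> k" and i: "i + n \<le> k" and n1: "n \<ge> 1"
  shows "wmeas \<mu> u \<le> K^3 * exp (- real n * (ms_entropy X \<mu> - \<delta>)) * wmeas \<mu> (Cf n k i u) * wmeas \<mu> (sf n i u) * wmeas \<mu> (Df n k i u)"
proof -
  note G = G_props[OF u]
  define E where "E = exp (- real n * (ms_entropy X \<mu> - \<delta>))"
  define P where "P = wmeas \<mu> (Cf n k i u) * wmeas \<mu> (sf n i u) * wmeas \<mu> (Df n k i u)"
  have P0: "P \<ge> 0" unfolding P_def by simp
  have wE: "wmeas \<mu> (take n u) \<le> E" unfolding E_def by (rule E_bound[OF G(4) n1])
  show ?thesis
  proof (cases "i + 2*n \<le> k")
    case True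
    note d = decomp(1)[OF u nk i True]
    have L1: "Cf n k i u @ sf n i u @ Df n k i u \<in> lang X"
      using lang_take[OF G(2), of "k-n"] d by simp
    have b1: "wmeas \<mu> (take (k-n) u) \<le> K^2 * P"
      using split3_bound[OF SFT K QB L1] d by (simp add: P_def mult.assoc)
    have e: "take (k-n) u @ take n u = u" using d by metis
    have "wmeas \<mu> (take (k-n) u @ take n u) \<le> K * wmeas \<mu> (take (k-n) u) * wmeas \<mu> (take n u)"
      by (rule QB) (simp only: e G(2))
    hence "wmeas \<mu> u \<le> K * wmeas \<mu> (take (k-n) u) * wmeas \<mu> (take n u)" by (simp only: e)
    also have "\<dots> \<le> K * (K^2 * P) * E"
      using b1 wE K P0 by (intro mult_mono mult_left_mono) auto
    finally show ?thesis by (simp add: E_def P_def power3_eq_cube power2_eq_square algebra_simps)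
  next
    case False
    note d = decomp(2)[OF u nk i False]
    have L1: "Cf n k i u @ sf n i u @ Df n k i u \<in> lang X"
      using lang_drop[OF SFT G(2), of n] d by simp
    have b1: "wmeas \<mu> (drop n u) \<le> K^2 * P"
      using split3_bound[OF SFT K QB L1] d by (simp add: P_def mult.assoc)
    have "wmeas \<mu> (take n u @ drop n u) \<le> K * wmeas \<mu> (take n u) * wmeas \<mu> (drop n u)"
      by (rule QB) (simp add: G(2))
    hence "wmeas \<mu> u \<le> K * wmeas \<mu> (take n u) * wmeas \<mu> (drop n u)" by simp
    also have "\<dots> \<le> K * E * (K^2 * P)"
      using b1 wE K P0 by (intro mult_mono mult_left_mono) (auto simp: E_def)
    finally show ?thesis by (simp add: E_def P_def power3_eq_cube power2_eq_square algebra_simps)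
  qed
qed

lemma inj_decomp:
  assumes u: "u \<in> G_set X \<mu> \<delta> n k" and v: "v \<in> G_set X \<mu> \<delta> n k"
    and nk: "3*n \<le> k" and i: "i + n \<le> k"
    and eq: "Cf n k i u = Cf n k i v" "sf n i u = sf n i v" "Df n k i u = Df n k i v"
  shows "u = v"
proof (cases "i + 2*n \<le> k")
  case True
  note du = decomp(1)[OF u nk i True] and dv = decomp(1)[OF v nk i True]
  have t: "take (k-n) u = take (k-n) v" using du dv eq by simp
  have "take n u = take n (take (k-n) u)" "take n v = take n (take (k-n) v)"
    using nk by (simp_all add: min_def)
  then show ?thesis using du dv t by metis
next
  case False
  note du = decomp(2)[OF u nk i False] and dv = decomp(2)[OF v nk i False]
  have t: "drop n u = drop n v" using du dv eq by simp
  have "take n u = drop (k-n-n) (drop n u)" "take n v = drop (k-n-n) (drop n v)"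
    using G_props(3)[OF u] G_props(3)[OF v] nk by (simp_all add: add.commute)
  then show ?thesis using du dv t by metis
qed

lemma finite_G: "finite (G_set X (\<mu>::(int \<Rightarrow> 'a::finite) measure) \<delta> n k)"
proof (rule finite_subset)
  show "G_set X \<mu> \<delta> n k \<subseteq> {xs. set xs \<subseteq> UNIV \<and> length xs = k}"
    by (auto simp: G_set_def words_def)
  show "finite {xs. set xs \<subseteq> (UNIV::'a set) \<and> length xs = k}"
    by (rule finite_lists_length_eq) simp
qed

lemma fiber_sum:
  fixes \<mu> :: "(int \<Rightarrow> 'a::finite) measure"
  assumes P: "prob_space \<mu>" and S: "sets \<mu> = sets shift_space"
    and SFT: "is_SFT X" and K: "K \<ge> 0"
    and QB: "\<And>u v. u @ v \<in> lang X \<Longrightarrow> wmeas \<mu> (u @ v) \<le> K * wmeas \<mu> u * wmeas \<mu> v"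
    and nk: "3*n \<le> k" and i: "i + n \<le> k" and n1: "n \<ge> 1"
  shows "(\<Sum>u\<in>{u\<in>G_set X \<mu> \<delta> n k. sf n i u = s}. wmeas \<mu> u)
     \<le> K^3 * exp (- real n * (ms_entropy X \<mu> - \<delta>)) * wmeas \<mu> s"
proof -
  define F where "F = {u\<in>G_set X \<mu> \<delta> n k. sf n i u = s}"
  define c where "c = K^3 * exp (- real n * (ms_entropy X \<mu> - \<delta>)) * wmeas \<mu> s"
  have c0: "c \<ge> 0" unfolding c_def using K by simp
  have finF: "finite F" unfolding F_def using finite_G by (rule finite_subset[rotated]) auto
  define g where "g = (\<lambda>p. wmeas \<mu> (fst p) * wmeas \<mu> (snd p))"
  define h where "h = (\<lambda>u::'a list. (Cf n k i u, Df n k i u))"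
  have "(\<Sum>u\<in>F. wmeas \<mu> u) \<le> (\<Sum>u\<in>F. c * g (h u))"
  proof (rule sum_mono)
    fix u assume u: "u \<in> F"
    hence uG: "u \<in> G_set X \<mu> \<delta> n k" and us: "sf n i u = s" by (auto simp: F_def)
    show "wmeas \<mu> u \<le> c * g (h u)"
      using point_bound[OF SFT K QB uG nk i n1] us by (simp add: c_def g_def h_def algebra_simps)
  qed
  also have "\<dots> = c * (\<Sum>u\<in>F. g (h u))" by (simp add: sum_distrib_left)
  also have "(\<Sum>u\<in>F. g (h u)) = (\<Sum>p\<in>h ` F. g p)"
  proof (rule sum.reindex[symmetric, unfolded comp_def])
    show "inj_on h F"
    proof (rule inj_onI)
      fix u v assume "u \<in> F" "v \<in> F" "h u = h v"
      then show "u = v" using inj_decomp[OF _ _ nk i, of u X \<mu> \<delta> v]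
        by (auto simp: F_def h_def)
    qed
  qed
  also have "\<dots> \<le> (\<Sum>p\<in>(Cf n k i ` F) \<times> (Df n k i ` F). g p)"
    by (rule sum_mono2) (auto simp: finF g_def h_def)
  also have "\<dots> = (\<Sum>a\<in>Cf n k i ` F. wmeas \<mu> a) * (\<Sum>b\<in>Df n k i ` F. wmeas \<mu> b)"
    by (simp add: sum_product sum.cartesian_product g_def case_prod_beta')
  also have "\<dots> \<le> 1 * 1"
  proof (rule mult_mono)
    show "(\<Sum>a\<in>Cf n k i ` F. wmeas \<mu> a) \<le> 1"
      by (rule sum_len_le1[OF P S, of _ "if i + 2*n \<le> k then i else i - n"])
        (use i in \<open>auto simp: F_def Cf_def G_set_def words_def\<close>)
    show "(\<Sum>b\<in>Df n k i ` F. wmeas \<mu> b) \<le> 1"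
      by (rule sum_len_le1[OF P S, of _ "if i + 2*n \<le> k then k - n - (i + n) else k - (i + n)"])
        (use i in \<open>auto simp: F_def Df_def G_set_def words_def\<close>)
  qed (auto intro: sum_nonneg)
  finally have "(\<Sum>u\<in>F. wmeas \<mu> u) \<le> c * 1" using c0 by (simp add: mult_left_mono)
  then show ?thesis by (simp add: F_def c_def)
qed

definition Fib where "Fib X \<mu> \<delta> n k i s = {u\<in>G_set X \<mu> \<delta> n k. sf n i u = s}"
definition Aij where "Aij X \<mu> \<delta> n k i j = (\<Union>s\<in>sf n i ` G_set X \<mu> \<delta> n k. Fib X \<mu> \<delta> n k i s \<times> Fib X \<mu> \<delta> n k j s)"

lemma Aij_bound:
  fixes \<mu> :: "(int \<Rightarrow> 'a::finite) measure"
  assumes P: "prob_space \<mu>" and S: "sets \<mu> = sets shift_space"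
    and SFT: "is_SFT X" and K: "K \<ge> 0"
    and QB: "\<And>u v. u @ v \<in> lang X \<Longrightarrow> wmeas \<mu> (u @ v) \<le> K * wmeas \<mu> u * wmeas \<mu> v"
    and nk: "3*n \<le> k" and i: "i + n \<le> k" and j: "j + n \<le> k" and n1: "n \<ge> 1"
    and n0: "\<And>u. u \<in> lang X \<Longrightarrow> length u \<ge> n0 \<Longrightarrow> wmeas \<mu> u \<le> \<gamma> ^ length u"
    and nn0: "n \<ge> n0" and gam: "\<gamma> \<ge> 0"
  shows "(\<Sum>p\<in>Aij X \<mu> \<delta> n k i j. wmeas \<mu> (fst p) * wmeas \<mu> (snd p))
     \<le> K^6 * exp (- real n * (ms_entropy X \<mu> - \<delta>))^2 * \<gamma>^n"
proof -
  define E where "E = exp (- real n * (ms_entropy X \<mu> - \<delta>))"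
  define G where "G = G_set X \<mu> \<delta> n k"
  define f where "f = (\<lambda>p::'a list \<times> 'a list. wmeas \<mu> (fst p) * wmeas \<mu> (snd p))"
  have finG: "finite G" unfolding G_def by (rule finite_G)
  have finF: "\<And>i s. finite (Fib X \<mu> \<delta> n k i s)"
    unfolding Fib_def using finite_G by (rule finite_subset[rotated]) auto
  have sl: "\<And>s. s \<in> sf n i ` G \<Longrightarrow> s \<in> lang X \<and> length s = n"
  proof -
    fix s assume "s \<in> sf n i ` G"
    then obtain u where u: "u \<in> G" "s = sf n i u" by auto
    note g = G_props[OF u(1)[unfolded G_def]]
    have "s \<in> lang X" using u(2) lang_take[OF lang_drop[OF SFT g(2)]] by (simp add: sf_def)
    moreover have "length s = n" using u(2) g(1) i by (simp add: sf_def)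
    ultimately show "s \<in> lang X \<and> length s = n" by simp
  qed
  have "(\<Sum>p\<in>Aij X \<mu> \<delta> n k i j. f p) \<le>
      (\<Sum>s\<in>sf n i ` G. \<Sum>p\<in>Fib X \<mu> \<delta> n k i s \<times> Fib X \<mu> \<delta> n k j s. f p)"
    unfolding Aij_def G_def by (rule sum_union_le) (auto simp: finF finG[unfolded G_def] f_def)
  also have "\<dots> \<le> (\<Sum>s\<in>sf n i ` G. (K^3 * E * wmeas \<mu> s) * (K^3 * E * wmeas \<mu> s))"
  proof (rule sum_mono)
    fix s assume "s \<in> sf n i ` G"
    have "(\<Sum>p\<in>Fib X \<mu> \<delta> n k i s \<times> Fib X \<mu> \<delta> n k j s. f p)
        = (\<Sum>u\<in>Fib X \<mu> \<delta> n k i s. wmeas \<mu> u) * (\<Sum>v\<in>Fib X \<mu> \<delta> n k j s. wmeas \<mu> v)"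
      by (simp add: sum_product sum.cartesian_product f_def case_prod_beta')
    also have "\<dots> \<le> (K^3 * E * wmeas \<mu> s) * (K^3 * E * wmeas \<mu> s)"
      using fiber_sum[OF P S SFT K QB nk i n1, of \<delta> s] fiber_sum[OF P S SFT K QB nk j n1, of \<delta> s]
      using K by (intro mult_mono) (auto simp: Fib_def E_def intro: sum_nonneg)
    finally show "(\<Sum>p\<in>Fib X \<mu> \<delta> n k i s \<times> Fib X \<mu> \<delta> n k j s. f p)
        \<le> (K^3 * E * wmeas \<mu> s) * (K^3 * E * wmeas \<mu> s)" .
  qed
  also have "\<dots> = K^6 * E^2 * (\<Sum>s\<in>sf n i ` G. wmeas \<mu> s * wmeas \<mu> s)"
    by (simp add: sum_distrib_left power2_eq_square algebra_simps)
  also have "(\<Sum>s\<in>sf n i ` G. wmeas \<mu> s * wmeas \<mu> s) \<le> (\<Sum>s\<in>sf n i ` G. \<gamma>^n * wmeas \<mu> s)"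
  proof (rule sum_mono)
    fix s assume "s \<in> sf n i ` G"
    with sl have "wmeas \<mu> s \<le> \<gamma>^n" using n0 nn0 by metis
    then show "wmeas \<mu> s * wmeas \<mu> s \<le> \<gamma>^n * wmeas \<mu> s" by (simp add: mult_right_mono)
  qed
  also have "\<dots> = \<gamma>^n * (\<Sum>s\<in>sf n i ` G. wmeas \<mu> s)" by (simp add: sum_distrib_left)
  finally have A: "(\<Sum>p\<in>Aij X \<mu> \<delta> n k i j. f p) \<le> K^6 * E^2 * (\<gamma>^n * (\<Sum>s\<in>sf n i ` G. wmeas \<mu> s))"
    using K by (simp add: mult_left_mono)
  have g0: "\<gamma>^n \<ge> 0" using gam by simp
  have "(\<Sum>s\<in>sf n i ` G. wmeas \<mu> s) \<le> 1" using sl by (intro sum_len_le1[OF P S]) auto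
  then have "K^6 * E^2 * (\<gamma>^n * (\<Sum>s\<in>sf n i ` G. wmeas \<mu> s)) \<le> K^6 * E^2 * (\<gamma>^n * 1)"
    using g0 K by (intro mult_left_mono) auto
  then show ?thesis using A by (simp add: f_def E_def)
qed

lemma Q_bound:
  fixes \<mu> :: "(int \<Rightarrow> 'a::finite) measure"
  assumes P: "prob_space \<mu>" and S: "sets \<mu> = sets shift_space"
    and SFT: "is_SFT X" and K: "K \<ge> 0"
    and QB: "\<And>u v. u @ v \<in> lang X \<Longrightarrow> wmeas \<mu> (u @ v) \<le> K * wmeas \<mu> u * wmeas \<mu> v"
    and nk: "3*n \<le> k" and n1: "n \<ge> 1"
    and n0: "\<And>u. u \<in> lang X \<Longrightarrow> length u \<ge> n0 \<Longrightarrow> wmeas \<mu> u \<le> \<gamma> ^ length u"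
    and nn0: "n \<ge> n0" and gam: "\<gamma> \<ge> 0"
  shows "(\<Sum>(u, v)\<in>Q_set X \<mu> \<delta> n k. wmeas \<mu> u * wmeas \<mu> v)
     \<le> (real k + 1)^2 * (K^6 * exp (- real n * (ms_entropy X \<mu> - \<delta>))^2 * \<gamma>^n)"
proof -
  define B where "B = K^6 * exp (- real n * (ms_entropy X \<mu> - \<delta>))^2 * \<gamma>^n"
  have B0: "B \<ge> 0" unfolding B_def using K gam by simp
  define f where "f = (\<lambda>p::'a list \<times> 'a list. wmeas \<mu> (fst p) * wmeas \<mu> (snd p))"
  define I where "I = {0..k-n} \<times> {0..k-n}"
  define A where "A = (\<lambda>p. Aij X \<mu> \<delta> n k (fst p) (snd p))"
  have finGG: "finite (G_set X \<mu> \<delta> n k \<times> G_set X \<mu> \<delta> n k)" using finite_G[of X \<mu> \<delta> n k] by simp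
  have AG: "\<And>p. A p \<subseteq> G_set X \<mu> \<delta> n k \<times> G_set X \<mu> \<delta> n k"
    by (auto simp: A_def Aij_def Fib_def)
  have finA: "\<And>p. finite (A p)" using finite_subset[OF AG finGG] .
  have sub: "Q_set X \<mu> \<delta> n k \<subseteq> \<Union>(A ` I)"
  proof
    fix p assume "p \<in> Q_set X \<mu> \<delta> n k"
    then obtain u v where p: "p = (u, v)" and u: "u \<in> G_set X \<mu> \<delta> n k" and v: "v \<in> G_set X \<mu> \<delta> n k"
      and w: "subwords n u \<inter> subwords n v \<noteq> {}" by (auto simp: Q_set_def)
    from w obtain i j where ij: "i + n \<le> length u" "j + n \<le> length v"
      "take n (drop i u) = take n (drop j v)" by (auto simp: subwords_def)
    have lu: "length u = k" "length v = k" using G_props(1)[OF u] G_props(1)[OF v] by auto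
    have "(i, j) \<in> I" using ij lu by (auto simp: I_def)
    moreover have "p \<in> A (i, j)"
    proof -
      have s: "sf n i u \<in> sf n i ` G_set X \<mu> \<delta> n k" using u by blast
      have "u \<in> Fib X \<mu> \<delta> n k i (sf n i u)" "v \<in> Fib X \<mu> \<delta> n k j (sf n i u)"
        using u v ij(3) by (auto simp: Fib_def sf_def)
      then show ?thesis unfolding A_def Aij_def p using s by auto
    qed
    ultimately show "p \<in> \<Union>(A ` I)" by auto
  qed
  have "(\<Sum>(u, v)\<in>Q_set X \<mu> \<delta> n k. wmeas \<mu> u * wmeas \<mu> v) = (\<Sum>p\<in>Q_set X \<mu> \<delta> n k. f p)"
    by (simp add: f_def case_prod_beta')
  also have "\<dots> \<le> (\<Sum>p\<in>\<Union>(A ` I). f p)"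
    by (rule sum_mono2) (use sub finA in \<open>auto simp: I_def f_def\<close>)
  also have "\<dots> \<le> (\<Sum>q\<in>I. \<Sum>p\<in>A q. f p)"
    by (rule sum_union_le) (simp_all add: I_def finA f_def)
  also have "\<dots> \<le> (\<Sum>q\<in>I. B)"
  proof (rule sum_mono)
    fix q assume "q \<in> I"
    then have h1: "fst q + n \<le> k" and h2: "snd q + n \<le> k" using nk by (auto simp: I_def)
    show "(\<Sum>p\<in>A q. f p) \<le> B"
      using Aij_bound[OF P S SFT K QB nk h1 h2 n1 n0 nn0 gam, of \<delta>]
      unfolding A_def f_def B_def by simp
  qed
  also have "\<dots> = real (card I) * B" by simp
  also have "\<dots> \<le> (real k + 1)^2 * B"
  proof (rule mult_right_mono[OF _ B0])
    have "card I = (k - n + 1)^2" by (simp add: I_def power2_eq_square)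
    also have "\<dots> \<le> (k+1)^2" by (intro power_mono) auto
    finally have "real (card I) \<le> real ((k+1)^2)" by linarith
    then show "real (card I) \<le> (real k + 1)^2" by (simp add: add.commute)
  qed
  finally show ?thesis by (simp add: B_def)
qed

lemma exp_lemma: "(1::real) \<le> ln 3" 
proof -
  have "exp 1 \<le> (3::real)" using exp_le by simp
  then show ?thesis by (subst ln_ge_iff) auto
qed

theorem mainTheorem9:
  fixes X :: "(int \<Rightarrow> 'a::finite) set"
    and f :: "(int \<Rightarrow> 'a) \<Rightarrow> real"
    and \<mu> :: "(int \<Rightarrow> 'a) measure"
    and K \<alpha> \<gamma> \<delta> :: real and n0 :: nat and k :: "nat \<Rightarrow> nat"
  assumes SFT: "is_SFT X" and mixing: "top_mixing X" and nontrivial: "infinite X"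
    and holder: "holder_on X f"
    and equil: "equilibrium_state X f \<mu>"
    and K_gt: "K > 1"
    and gibbs: "\<And>m x. m \<ge> 1 \<Longrightarrow> x \<in> X \<Longrightarrow>
        inverse K \<le> wmeas \<mu> (init_word x m) / exp (- pressure X f * real m + birkhoff f m x)
      \<and> wmeas \<mu> (init_word x m) / exp (- pressure X f * real m + birkhoff f m x) \<le> K"
    and quasi_bern: "\<And>u v. u @ v \<in> lang X \<Longrightarrow>
        wmeas \<mu> (u @ v) \<le> K * wmeas \<mu> u * wmeas \<mu> v
      \<and> measure \<mu> ((shift ^^ length u) -` cyl v \<inter> cyl u) / measure \<mu> (cyl u) \<le> K * wmeas \<mu> v"
    and alpha: "gamma0 X \<mu> < \<alpha>" "\<alpha> \<le> 1"
    and gamma: "gamma0 X \<mu> < \<gamma>" "\<gamma> < \<alpha>"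
    and n0: "\<And>u. u \<in> lang X \<Longrightarrow> length u \<ge> n0 \<Longrightarrow> wmeas \<mu> u \<le> \<gamma> ^ length u"
    and delta: "0 < \<delta>" "\<delta> < ln (\<alpha> / \<gamma>) / 4"
    and k1: "(\<lambda>n. real n / real (k n)) \<longlonglongrightarrow> 0"
    and k2: "(\<lambda>n. real (k n)) \<in> o(\<lambda>n. real n ^ 2 / ln (real n))"
  shows "\<exists>p3 :: real poly. \<forall>\<^sub>F n in sequentially.
     (\<Sum>(u, v)\<in>Q_set X \<mu> \<delta> n (k n). wmeas \<mu> u * wmeas \<mu> v)
       \<le> poly p3 (real n) * exp (- 2 * real n * (ms_entropy X \<mu> - \<delta>)) * \<gamma> ^ n"
proof -
  have inv: "invariant_on X \<mu>" using equil by (simp add: equilibrium_state_def)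
  then have P: "prob_space \<mu>" and S: "sets \<mu> = sets shift_space" by (auto simp: invariant_on_def)
  have QB: "\<And>u v. u @ v \<in> lang X \<Longrightarrow> wmeas \<mu> (u @ v) \<le> K * wmeas \<mu> u * wmeas \<mu> v"
    using quasi_bern by blast
  have K0: "K \<ge> 0" using K_gt by simp
  have gam0: "\<gamma> \<ge> 0"
  proof -
    obtain x where x: "x \<in> X" using nontrivial by (metis finite.emptyI ex_in_conv)
    define m where "m = 2 * n0 + 1"
    define w where "w = init_word x m"
    have lw: "length w = m" by (simp add: w_def init_word_def)
    have "x \<in> cyl w" by (simp add: w_def init_word_def cyl_def)
    then have "w \<in> lang X" using x by (auto simp: lang_def)
    then have "wmeas \<mu> w \<le> \<gamma> ^ length w" by (rule n0) (simp add: lw m_def)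
    then have "wmeas \<mu> w \<le> \<gamma> ^ m" using lw by simp
    then have "0 \<le> \<gamma> ^ m" using wmeas_nonneg[of \<mu> w] by linarith
    moreover have "odd m" by (simp add: m_def)
    ultimately show ?thesis by (simp only: zero_le_power_eq) blast
  qed
  define p3 where "p3 = smult (K^6) ([:1, 0, 1:]^2)"
  have ev1: "\<forall>\<^sub>F n in sequentially. n \<ge> max n0 3" by (rule eventually_ge_at_top)
  have ev2: "\<forall>\<^sub>F n in sequentially. real n / real (k n) < 1/3"
    by (rule order_tendstoD(2)[OF k1]) simp
  have ev3: "\<forall>\<^sub>F n in sequentially. norm (real (k n)) \<le> 1 * norm (real n ^ 2 / ln (real n))"
    by (rule landau_o.smallD[OF k2]) simp
  have "\<forall>\<^sub>F n in sequentially.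
     (\<Sum>(u, v)\<in>Q_set X \<mu> \<delta> n (k n). wmeas \<mu> u * wmeas \<mu> v)
       \<le> poly p3 (real n) * exp (- 2 * real n * (ms_entropy X \<mu> - \<delta>)) * \<gamma> ^ n"
    using ev1 ev2 ev3
  proof eventually_elim
    case (elim n)
    have n1: "n \<ge> 1" and nn0: "n \<ge> n0" and n3: "n \<ge> 3" using elim(1) by auto
    define E where "E = exp (- real n * (ms_entropy X \<mu> - \<delta>))"
    have E2: "E^2 = exp (- 2 * real n * (ms_entropy X \<mu> - \<delta>))"
      unfolding E_def by (simp add: power2_eq_square exp_add[symmetric])
    have pp: "poly p3 (real n) = K^6 * (real n ^ 2 + 1)^2"
      by (simp add: p3_def power2_eq_square algebra_simps)
    have R0: "0 \<le> poly p3 (real n) * exp (- 2 * real n * (ms_entropy X \<mu> - \<delta>)) * \<gamma> ^ n"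
      using pp K0 gam0 by simp
    show ?case
    proof (cases "k n = 0")
      case True
      have "G_set X \<mu> \<delta> n (k n) = {}"
      proof (rule ccontr)
        assume "G_set X \<mu> \<delta> n (k n) \<noteq> {}"
        then obtain u where u: "u \<in> G_set X \<mu> \<delta> n (k n)" by auto
        have "length u = 0" using G_props(1)[OF u] True by simp
        moreover have "length (take n u) = n" using G_props(4)[OF u] by (simp add: E_set_def words_def)
        ultimately show False using n1 by simp
      qed
      then have "Q_set X \<mu> \<delta> n (k n) = {}" by (simp add: Q_set_def)
      then show ?thesis using R0 by simp
    next
      case False
      have nk: "3 * n \<le> k n"
      proof -
        have "real n < real (k n) / 3" using elim(2) False by (simp add: field_simps)
        then show ?thesis by linarith
      qed
      have "ln 3 \<le> ln (real n)" using n3 by (subst ln_le_cancel_iff) auto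
      then have lnn: "1 \<le> ln (real n)" using exp_lemma by linarith
      have "real (k n) \<le> real n ^ 2 / ln (real n)" using elim(3) lnn by simp
      also have "\<dots> \<le> real n ^ 2 / 1" using lnn by (intro divide_left_mono) auto
      also have "\<dots> = real n ^ 2" by simp
      finally have kn: "real (k n) \<le> real n ^ 2" .
      have "(\<Sum>(u, v)\<in>Q_set X \<mu> \<delta> n (k n). wmeas \<mu> u * wmeas \<mu> v)
          \<le> (real (k n) + 1)^2 * (K^6 * E^2 * \<gamma>^n)"
        unfolding E_def by (rule Q_bound[OF P S SFT K0 QB nk n1 n0 nn0 gam0])
      also have "\<dots> \<le> (real n ^ 2 + 1)^2 * (K^6 * E^2 * \<gamma>^n)"
        using kn K0 gam0 by (intro mult_right_mono power_mono) auto
      also have "\<dots> = poly p3 (real n) * exp (- 2 * real n * (ms_entropy X \<mu> - \<delta>)) * \<gamma> ^ n"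
        using pp E2 by (simp add: algebra_simps)
      finally show ?thesis .
    qed
  qed
  then show ?thesis by blast
qed

end
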